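(* Let $s,t$ be real numbers with $t\ge s>0$, and define $K_0=1$, $K_1=t$, $K_2=t^2$, and $K_n = tK_{n-1}+s^2K_{n-2}$ for $n\ge 3$. Then $K_n \ge M_n$ for every integer $n\ge 0$.
   Context: For a real number $s$, a positive integer $n$ and a set $P \subseteq \mathbb{R}$, $\mathcal{G}_s^{n\times n}(P)$ denotes the set of all $n\times n$ real upper Hessenberg matrices $A=(a_{ij})$ with $a_{i+1,i} = s$ for $1\le i\le n-1$, $a_{ij}=0$ for $i > j+1$, and $a_{ij}\in P$ for all $i \le j$. For $n\ge 1$, $M_n$ is the maximum of $|\det A|$ over $A\in\mathcal{G}_s^{n\times n}([0,t])$, and $M_0 := 1$. *)

theory Defs
  imports Jordan_Normal_Form.Determinant
begin

definition hess_set :: "real \<Rightarrow> nat \<Rightarrow> real set \<Rightarrow> real mat set" where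
  "hess_set s n P = {A. A \<in> carrier_mat n n \<and>
     (\<forall>i<n. \<forall>j<n. (i = j + 1 \<longrightarrow> A $$ (i, j) = s) \<and>
                   (i > j + 1 \<longrightarrow> A $$ (i, j) = 0) \<and>
                   (i \<le> j \<longrightarrow> A $$ (i, j) \<in> P))}"

text \<open>M_n: the maximum of |det A| over G_s^{n x n}([0,t]) (the set is compact and
nonempty, so the supremum is attained); M_0 = 1.\<close>
definition Mmax :: "real \<Rightarrow> real \<Rightarrow> nat \<Rightarrow> real" where
  "Mmax s t n = (if n = 0 then 1 else (SUP A \<in> hess_set s n {0..t}. \<bar>det A\<bar>))"

fun K :: "real \<Rightarrow> real \<Rightarrow> nat \<Rightarrow> real" where
  "K s t 0 = 1"
| "K s t (Suc 0) = t"
| "K s t (Suc (Suc 0)) = t ^ 2"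
| "K s t (Suc (Suc (Suc n))) = t * K s t (Suc (Suc n)) + s ^ 2 * K s t (Suc n)"

end

theory Submission imports Defs begin

definition hess :: "real \<Rightarrow> nat \<Rightarrow> real mat \<Rightarrow> bool" where
  "hess s m H \<longleftrightarrow> H \<in> carrier_mat m m \<and>
     (\<forall>i<m. \<forall>j<m. (i = j + 1 \<longrightarrow> H $$ (i, j) = s) \<and> (j + 1 < i \<longrightarrow> H $$ (i, j) = 0))"

definition lead :: "real mat \<Rightarrow> nat \<Rightarrow> real mat" where
  "lead H k = mat k k (\<lambda>(i,j). H $$ (i,j))"

lemma lead_carrier[simp]: "lead H k \<in> carrier_mat k k"
  unfolding lead_def by auto

lemma lead_index[simp]: "i < k \<Longrightarrow> j < k \<Longrightarrow> lead H k $$ (i,j) = H $$ (i,j)"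
  unfolding lead_def by simp

lemma lead_lead: "i \<le> k \<Longrightarrow> lead (lead H k) i = lead H i"
  unfolding lead_def by (rule eq_matI) auto

lemma lead_full: "H \<in> carrier_mat n n \<Longrightarrow> lead H n = H"
  unfolding lead_def by (rule eq_matI) auto

lemma hess_lead: "hess s m H \<Longrightarrow> k \<le> m \<Longrightarrow> hess s k (lead H k)"
proof -
  assume h: "hess s m H" and km: "k \<le> m"
  show ?thesis unfolding hess_def lead_def
  proof (intro conjI allI impI)
    fix i j assume "i < k" "j < k"
    then have "i < m" "j < m" using km by auto
    then show "i = j + 1 \<Longrightarrow> mat k k (\<lambda>(i, j). H $$ (i, j)) $$ (i, j) = s"
      and "j + 1 < i \<Longrightarrow> mat k k (\<lambda>(i, j). H $$ (i, j)) $$ (i, j) = 0"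
      using h `i < k` `j < k` unfolding hess_def by auto
  qed auto
qed

lemma hess_det:
  "hess s m H \<Longrightarrow> 0 < m \<Longrightarrow>
    det H = (\<Sum>i<m. (-s)^(m-1-i) * H $$ (i, m-1) * det (lead H i))"
proof (induction m arbitrary: H)
  case 0 then show ?case by simp
next
  case (Suc k)
  have H: "H \<in> carrier_mat (Suc k) (Suc k)" using Suc.prems unfolding hess_def by auto
  show ?case
  proof (cases k)
    case 0
    have "det H = (\<Sum>j<1. H $$ (0,j) * cofactor H 0 j)"
      using laplace_expansion_row[OF H[unfolded 0]] by simp
    also have "\<dots> = H $$ (0,0)"
    proof -
      have "mat_delete H 0 0 \<in> carrier_mat 0 0" using mat_delete_carrier[OF H] 0 by simp
      then show ?thesis unfolding cofactor_def by simp
    qed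
    finally show ?thesis using 0 by (simp add: lead_def)
  next
    case (Suc k')
    define B where "B = mat_delete H k k'"
    have B: "B \<in> carrier_mat k k" using mat_delete_carrier[OF H] unfolding B_def by simp
    have Bidx: "B $$ (i,j) = H $$ (i, if j < k' then j else Suc j)" if "i < k" "j < k" for i j
      using that H Suc unfolding B_def mat_delete_def by auto
    have hB: "hess s k B"
      unfolding hess_def using B Bidx Suc.prems Suc unfolding hess_def by auto
    have leadB: "lead B i = lead H i" if "i \<le> k'" for i
      unfolding lead_def using that Bidx Suc by (intro eq_matI) auto
    have IH: "det B = (\<Sum>i<k. (-s)^(k-1-i) * B $$ (i, k-1) * det (lead B i))"
      using Suc.IH[OF hB] Suc by simp
    also have "\<dots> = (\<Sum>i<k. (-s)^(k-1-i) * H $$ (i, k) * det (lead H i))"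
      using Suc Bidx leadB by (intro sum.cong) auto
    finally have dB: "det B = \<dots>" .
    have "det H = (\<Sum>j<Suc k. H $$ (k,j) * cofactor H k j)"
      using laplace_expansion_row[OF H] by simp
    also have "\<dots> = H $$ (k,k') * cofactor H k k' + H $$ (k,k) * cofactor H k k"
    proof -
      have "(\<Sum>j<k'. H $$ (k,j) * cofactor H k j) = 0"
        using Suc.prems Suc unfolding hess_def by (intro sum.neutral) auto
      then show ?thesis using Suc by simp
    qed
    also have "\<dots> = -s * det B + H $$ (k,k) * det (lead H k)"
    proof -
      have "mat_delete H k k = lead H k"
        unfolding mat_delete_def lead_def using H by (intro eq_matI) auto
      moreover have "H $$ (k,k') = s" using Suc.prems Suc unfolding hess_def by auto
      moreover have "(-1::real)^(k+k') = -1" using Suc by simp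
      ultimately show ?thesis unfolding cofactor_def B_def by simp
    qed
    also have "\<dots> = (\<Sum>i<Suc k. (-s)^(Suc k-1-i) * H $$ (i, Suc k-1) * det (lead H i))"
    proof -
      have "-s * det B = (\<Sum>i<k. (-s)^(Suc k-1-i) * H $$ (i, Suc k-1) * det (lead H i))"
        unfolding dB sum_distrib_left
      proof (intro sum.cong refl)
        fix i assume "i \<in> {..<k}"
        then have "Suc k - 1 - i = Suc (k-1-i)" by auto
        then show "-s * ((-s)^(k-1-i) * H $$ (i, k) * det (lead H i)) =
          (-s)^(Suc k-1-i) * H $$ (i, Suc k-1) * det (lead H i)" by simp
      qed
      then show ?thesis by simp
    qed
    finally show ?thesis .
  qed
qed

fun Fq :: "real \<Rightarrow> nat \<Rightarrow> real" where
  "Fq \<tau> 0 = 1"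
| "Fq \<tau> (Suc 0) = \<tau>"
| "Fq \<tau> (Suc (Suc m)) = \<tau> * Fq \<tau> (Suc m) + Fq \<tau> m"

definition Gq :: "real \<Rightarrow> nat \<Rightarrow> real" where
  "Gq \<tau> m = (if m = 0 then 0 else Fq \<tau> (m - 1))"

lemma Fq_step: "Fq \<tau> (Suc m) = \<tau> * Fq \<tau> m + Gq \<tau> m"
  unfolding Gq_def by (cases m) auto

lemma Fq_mono: "1 \<le> \<tau> \<Longrightarrow> 0 \<le> Gq \<tau> m \<and> Gq \<tau> m \<le> Fq \<tau> m"
proof (induction m)
  case 0 then show ?case by (simp add: Gq_def)
next
  case (Suc m)
  then have "Gq \<tau> (Suc m) = Fq \<tau> m" by (simp add: Gq_def)
  moreover have "Fq \<tau> m \<le> \<tau> * Fq \<tau> m"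
  proof -
    have f0: "0 \<le> Fq \<tau> m" using Suc by linarith
    have "Fq \<tau> m * 1 \<le> Fq \<tau> m * \<tau>" using Suc.prems f0 by (rule mult_left_mono)
    then show ?thesis by (simp add: mult.commute)
  qed
  moreover have "0 \<le> Fq \<tau> m" using Suc by linarith
  ultimately show ?case using Suc.IH Suc.prems Fq_step[of \<tau> m] by linarith
qed

definition Ap :: "(nat \<Rightarrow> real) \<Rightarrow> nat \<Rightarrow> real" where
  "Ap d m = (\<Sum>i\<le>m. max (d i) 0)"
definition Bn :: "(nat \<Rightarrow> real) \<Rightarrow> nat \<Rightarrow> real" where
  "Bn d m = (\<Sum>i\<le>m. max (- d i) 0)"

lemma Ap_nonneg: "0 \<le> Ap d m" unfolding Ap_def by (intro sum_nonneg) auto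
lemma Bn_nonneg: "0 \<le> Bn d m" unfolding Bn_def by (intro sum_nonneg) auto

lemma game:
  assumes tau: "1 \<le> \<tau>" and d0: "d 0 = 1"
    and step: "\<And>m. - \<tau> * Ap d m \<le> d (Suc m) \<and> d (Suc m) \<le> \<tau> * Bn d m"
  shows "(Ap d m \<le> Fq \<tau> m \<and> Bn d m \<le> Gq \<tau> m) \<or> (Ap d m \<le> Gq \<tau> m \<and> Bn d m \<le> Fq \<tau> m)"
proof (induction m)
  case 0 then show ?case using d0 by (simp add: Ap_def Bn_def Gq_def)
next
  case (Suc m)
  let ?A = "Ap d m" and ?B = "Bn d m" and ?F = "Fq \<tau> m" and ?G = "Gq \<tau> m" and ?x = "d (Suc m)"
  have A1: "Ap d (Suc m) = ?A + max ?x 0" unfolding Ap_def by simp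
  have B1: "Bn d (Suc m) = ?B + max (- ?x) 0" unfolding Bn_def by simp
  have F1: "Fq \<tau> (Suc m) = \<tau> * ?F + ?G" by (rule Fq_step)
  have G1: "Gq \<tau> (Suc m) = ?F" by (simp add: Gq_def)
  have GF: "0 \<le> ?G" "?G \<le> ?F" using Fq_mono[OF tau] by auto
  have A0: "0 \<le> ?A" and B0: "0 \<le> ?B" by (rule Ap_nonneg, rule Bn_nonneg)
  have t0: "0 \<le> \<tau>" using tau by simp
  have key: "?F + \<tau> * ?G \<le> \<tau> * ?F + ?G"
  proof -
    have "0 \<le> (\<tau> - 1) * (?F - ?G)" using tau GF by simp
    then show ?thesis by (simp add: algebra_simps)
  qed
  show ?case
  proof (cases "0 \<le> ?x")
    case True
    then have A': "Ap d (Suc m) = ?A + ?x" and B': "Bn d (Suc m) = ?B" using A1 B1 by auto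
    have x: "?x \<le> \<tau> * ?B" using step by auto
    from Suc show ?thesis
    proof
      assume h: "?A \<le> ?F \<and> ?B \<le> ?G"
      have hm: "\<tau> * ?B \<le> \<tau> * ?G" using h t0 by (simp add: mult_left_mono)
      show ?thesis using hm h x key A' B' F1 G1 GF apply - apply (rule disjI1, rule conjI) by linarith+
    next
      assume h: "?A \<le> ?G \<and> ?B \<le> ?F"
      have hm: "\<tau> * ?B \<le> \<tau> * ?F" using h t0 by (simp add: mult_left_mono)
      show ?thesis using hm h x A' B' F1 G1 GF apply - apply (rule disjI1, rule conjI) by linarith+
    qed
  next
    case False
    then have A': "Ap d (Suc m) = ?A" and B': "Bn d (Suc m) = ?B - ?x" using A1 B1 by auto
    have x: "- ?x \<le> \<tau> * ?A" using step[of m] by linarith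
    from Suc show ?thesis
    proof
      assume h: "?A \<le> ?F \<and> ?B \<le> ?G"
      have hm: "\<tau> * ?A \<le> \<tau> * ?F" using h t0 by (simp add: mult_left_mono)
      show ?thesis using hm h x A' B' F1 G1 GF apply - apply (rule disjI2, rule conjI) by linarith+
    next
      assume h: "?A \<le> ?G \<and> ?B \<le> ?F"
      have hm: "\<tau> * ?A \<le> \<tau> * ?G" using h t0 by (simp add: mult_left_mono)
      show ?thesis using hm h x key A' B' F1 G1 GF apply - apply (rule disjI2, rule conjI) by linarith+
    qed
  qed
qed

lemma game_bound:
  assumes tau: "1 \<le> \<tau>" and d0: "d 0 = 1"
    and step: "\<And>m. - \<tau> * Ap d m \<le> d (Suc m) \<and> d (Suc m) \<le> \<tau> * Bn d m"
  shows "\<bar>d (Suc m)\<bar> \<le> \<tau> * Fq \<tau> m"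
proof -
  have GF: "Gq \<tau> m \<le> Fq \<tau> m" using Fq_mono[OF tau] by auto
  have t0: "0 \<le> \<tau>" using tau by simp
  have "Ap d m \<le> Fq \<tau> m" "Bn d m \<le> Fq \<tau> m" using game[OF tau d0 step, of m] GF by auto
  then have "\<tau> * Ap d m \<le> \<tau> * Fq \<tau> m" "\<tau> * Bn d m \<le> \<tau> * Fq \<tau> m"
    using t0 by (auto intro: mult_left_mono)
  then show ?thesis using step[of m] by linarith
qed

lemma K_Fq:
  assumes "t = \<tau> * s"
  shows "K s t (Suc m) = s ^ Suc m * \<tau> * Fq \<tau> m"
proof (induction m rule: less_induct)
  case (less m)
  show ?case
  proof (cases m)
    case 0 then show ?thesis using assms by simp
  next
    case (Suc k)
    show ?thesis
    proof (cases k)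
      case 0 then show ?thesis using assms Suc by (simp add: power2_eq_square)
    next
      case (Suc j)
      have "K s t (Suc m) = t * K s t (Suc (Suc j)) + s^2 * K s t (Suc j)"
        using `m = Suc k` Suc by simp
      also have "\<dots> = t * (s ^ Suc (Suc j) * \<tau> * Fq \<tau> (Suc j)) + s^2 * (s ^ Suc j * \<tau> * Fq \<tau> j)"
        using less.IH[of "Suc j"] less.IH[of j] `m = Suc k` Suc by simp
      also have "\<dots> = s ^ Suc m * \<tau> * Fq \<tau> m"
        using `m = Suc k` Suc assms by (simp add: algebra_simps power2_eq_square)
      finally show ?thesis .
    qed
  qed
qed


lemma term_bound:
  fixes c x \<tau> :: real
  assumes "0 \<le> c" "c \<le> \<tau>"
  shows "- \<tau> * max x 0 \<le> - (c * x) \<and> - (c * x) \<le> \<tau> * max (- x) 0"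
proof (cases "0 \<le> x")
  case True
  have "c * x \<le> \<tau> * x" using assms True by (simp add: mult_right_mono)
  moreover have "0 \<le> c * x" using assms True by simp
  ultimately show ?thesis using True by simp
next
  case False
  have "\<tau> * (-x) \<ge> c * (-x)" using assms False by (simp add: mult_right_mono)
  moreover have "c * x \<le> 0" using assms False by (simp add: mult_nonneg_nonpos)
  ultimately show ?thesis using False by simp
qed

theorem lemma3p5:
  fixes s t :: real and n :: nat
  assumes "0 < s" and "s \<le> t"
  shows "K s t n \<ge> Mmax s t n"
proof (cases "n = 0")
  case True then show ?thesis by (simp add: Mmax_def)
next
  case False
  then obtain m where n: "n = Suc m" by (cases n) auto
  define \<tau> where "\<tau> = t / s"
  have s0: "0 < s" using assms by simp
  have ts: "t = \<tau> * s" unfolding \<tau>_def using s0 by simp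
  have tau: "1 \<le> \<tau>" unfolding \<tau>_def using assms by simp
  have ne: "hess_set s n {0..t} \<noteq> {}"
  proof -
    have "mat n n (\<lambda>(i,j). if i = j + 1 then s else 0) \<in> hess_set s n {0..t}"
      unfolding hess_set_def using assms by auto
    then show ?thesis by blast
  qed
  have bound: "\<bar>det A\<bar> \<le> K s t n" if A: "A \<in> hess_set s n {0..t}" for A
  proof -
    have Ac: "A \<in> carrier_mat n n" using A unfolding hess_set_def by auto
    have hA: "hess s n A" using A unfolding hess_set_def hess_def by auto
    have Aent: "0 \<le> A $$ (i,j) \<and> A $$ (i,j) \<le> t" if "i < n" "j < n" "i \<le> j" for i j
      using A that unfolding hess_set_def by auto
    define D where "D i = det (lead A i)" for i
    define d where "d i = (if i \<le> n then D i / (-s)^i else 0)" for i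
    have Dd: "D i = d i * (-s)^i" if "i \<le> n" for i
      unfolding d_def using that s0 by simp
    have d0: "d 0 = 1" unfolding d_def D_def by simp
    have step: "- \<tau> * Ap d k \<le> d (Suc k) \<and> d (Suc k) \<le> \<tau> * Bn d k" for k
    proof (cases "Suc k \<le> n")
      case False
      then have "d (Suc k) = 0" unfolding d_def by simp
      then show ?thesis using tau Ap_nonneg[of d k] Bn_nonneg[of d k] by simp
    next
      case True
      have hk: "hess s (Suc k) (lead A (Suc k))" by (rule hess_lead[OF hA True])
      have "D (Suc k) = (\<Sum>i<Suc k. (-s)^(Suc k-1-i) * lead A (Suc k) $$ (i, Suc k-1) * det (lead (lead A (Suc k)) i))"
        unfolding D_def by (rule hess_det[OF hk]) simp
      also have "\<dots> = (\<Sum>i<Suc k. (-s)^(k-i) * A $$ (i, k) * D i)"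
        unfolding D_def by (intro sum.cong refl) (simp add: lead_lead)
      finally have DS: "D (Suc k) = \<dots>" .
      have "d (Suc k) = D (Suc k) / (-s)^(Suc k)" unfolding d_def using True by simp
      also have "\<dots> = (\<Sum>i<Suc k. (-s)^(k-i) * A $$ (i, k) * D i / (-s)^(Suc k))"
        unfolding DS sum_divide_distrib ..
      also have "\<dots> = (\<Sum>i\<le>k. - ((A $$ (i, k) / s) * d i))"
        unfolding lessThan_Suc_atMost[symmetric]
      proof (intro sum.cong refl)
        fix i assume "i \<in> {..<Suc k}"
        then have i: "i \<le> k" by simp
        have pw: "(-s)^(Suc k) = (-s)^(k-i) * (-s)^i * (-s)"
          using i by (simp add: power_add[symmetric])
        have nz: "(-s)^(k-i) \<noteq> 0" "(-s)^i \<noteq> 0" using s0 by auto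
        show "(-s)^(k-i) * A $$ (i, k) * D i / (-s)^(Suc k) = - ((A $$ (i, k) / s) * d i)"
        proof -
          have Di: "D i = d i * (-s)^i" using Dd[of i] i True by simp
          have "(-s)^(k-i) * A $$ (i, k) * D i / (-s)^(Suc k)
              = (A $$ (i, k) * d i) * ((-s)^(k-i) * (-s)^i) / ((-s)^(k-i) * (-s)^i * (-s))"
            unfolding Di pw by (simp add: algebra_simps)
          also have "\<dots> = (A $$ (i, k) * d i) / (-s)"
            using nz by simp
          also have "\<dots> = - ((A $$ (i, k) / s) * d i)" by simp
          finally show ?thesis .
        qed
      qed
      finally have dS: "d (Suc k) = (\<Sum>i\<le>k. - ((A $$ (i, k) / s) * d i))" .
      have tb: "- \<tau> * max (d i) 0 \<le> - ((A $$ (i, k) / s) * d i) \<and>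
                - ((A $$ (i, k) / s) * d i) \<le> \<tau> * max (- d i) 0" if "i \<in> {..k}" for i
      proof (rule term_bound)
        have "0 \<le> A $$ (i,k) \<and> A $$ (i,k) \<le> t" using Aent[of i k] that True by simp
        then show "0 \<le> A $$ (i, k) / s" "A $$ (i, k) / s \<le> \<tau>"
          using s0 unfolding \<tau>_def by (auto simp: divide_right_mono)
      qed
      have "- \<tau> * Ap d k = (\<Sum>i\<le>k. - \<tau> * max (d i) 0)" unfolding Ap_def sum_distrib_left ..
      also have "\<dots> \<le> d (Suc k)" unfolding dS using tb by (intro sum_mono) auto
      finally have l: "- \<tau> * Ap d k \<le> d (Suc k)" .
      have "d (Suc k) \<le> (\<Sum>i\<le>k. \<tau> * max (- d i) 0)" unfolding dS using tb by (intro sum_mono) auto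
      also have "\<dots> = \<tau> * Bn d k" unfolding Bn_def sum_distrib_left ..
      finally show ?thesis using l by simp
    qed
    have "\<bar>det A\<bar> = \<bar>D n\<bar>" unfolding D_def using lead_full[OF Ac] by simp
    also have "\<dots> = \<bar>d (Suc m)\<bar> * s ^ Suc m" using Dd[of n] n s0 by (simp add: abs_mult power_abs)
    also have "\<dots> \<le> \<tau> * Fq \<tau> m * s ^ Suc m"
      using game_bound[OF tau d0 step, of m] s0 by (simp add: mult_right_mono)
    also have "\<dots> = K s t n" using K_Fq[OF ts, of m] n by simp
    finally show ?thesis .
  qed
  show ?thesis unfolding Mmax_def using False ne bound by (simp add: cSUP_least)
qed

end
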